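(* Let $\Omega$ be a compact Hausdorff space and let $\Gamma$ be a group acting minimally on $\Omega$ by homeomorphisms. Suppose that some element $g\in\Gamma$ has an attracting fixed point in $\Omega$. Then there is an integer $n$ such that for any nonempty open subsets $U_1,\dots,U_n$ of $\Omega$ there exist $t_1,\dots,t_n\in\Gamma$ with $t_1U_1\cup\dots\cup t_nU_n=\Omega$ (i.e. the action is $n$-filling).
   Context: An element $g\in\Gamma$ has an attracting fixed point $x\in\Omega$ if $gx=x$ and there exists a neighbourhood $V_x$ of $x$ such that $\lim_{n\to\infty}g^n(V_x)=\{x\}$ (i.e. for every neighbourhood $W$ of $x$, $g^n(V_x)\subset W$ for all sufficiently large $n$). *)

theory Defs
  imports "HOL-Analysis.Analysis" "HOL-Algebra.Group_Action"
begin

definition homeo_action :: "('g, 'c) monoid_scheme \<Rightarrow> 'a topology \<Rightarrow> ('g \<Rightarrow> 'a \<Rightarrow> 'a) \<Rightarrow> bool" where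
  "homeo_action G X \<phi> \<longleftrightarrow> group_action G (topspace X) \<phi> \<and>
     (\<forall>g \<in> carrier G. homeomorphic_map X X (\<phi> g))"

definition minimal_action :: "('g, 'c) monoid_scheme \<Rightarrow> 'a topology \<Rightarrow> ('g \<Rightarrow> 'a \<Rightarrow> 'a) \<Rightarrow> bool" where
  "minimal_action G X \<phi> \<longleftrightarrow>
     (\<forall>x \<in> topspace X. X closure_of (orbit G \<phi> x) = topspace X)"

definition attracting_fixed_point ::
    "('g, 'c) monoid_scheme \<Rightarrow> 'a topology \<Rightarrow> ('g \<Rightarrow> 'a \<Rightarrow> 'a) \<Rightarrow> 'g \<Rightarrow> 'a \<Rightarrow> bool" where
  "attracting_fixed_point G X \<phi> g x \<longleftrightarrow>
     x \<in> topspace X \<and> \<phi> g x = x \<and>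
     (\<exists>V. openin X V \<and> x \<in> V \<and>
        (\<forall>W. openin X W \<and> x \<in> W \<longrightarrow>
           (\<exists>N. \<forall>n\<ge>N. \<phi> (g [^]\<^bsub>G\<^esub> (n::nat)) ` V \<subseteq> W)))"

definition n_filling :: "('g, 'c) monoid_scheme \<Rightarrow> 'a topology \<Rightarrow> ('g \<Rightarrow> 'a \<Rightarrow> 'a) \<Rightarrow> nat \<Rightarrow> bool" where
  "n_filling G X \<phi> n \<longleftrightarrow>
     (\<forall>U :: nat \<Rightarrow> 'a set. (\<forall>i<n. openin X (U i) \<and> U i \<noteq> {}) \<longrightarrow>
        (\<exists>t. (\<forall>i<n. t i \<in> carrier G) \<and> (\<Union>i<n. \<phi> (t i) ` U i) = topspace X))"

end

theory Submission
  imports Defs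
begin

lemma orbit_meets_open:
  fixes G (structure)
  assumes "homeo_action G X \<phi>" "minimal_action G X \<phi>" "y \<in> topspace X"
    "openin X U" "U \<noteq> {}"
  shows "\<exists>h\<in>carrier G. y \<in> \<phi> h ` U"
proof -
  interpret group_action G "topspace X" \<phi> using assms(1) by (simp add: homeo_action_def)
  interpret group G using group_hom group_hom.axioms(1) by auto
  have "X closure_of (orbit G \<phi> y) = topspace X" using assms(2,3) by (simp add: minimal_action_def)
  hence "U \<inter> orbit G \<phi> y \<noteq> {}" using openin_Int_closure_of_eq_empty[OF assms(4), of "orbit G \<phi> y"]
    assms(4,5) openin_subset by fastforce
  then obtain a u where a: "a \<in> carrier G" "u \<in> U" "\<phi> a y = u" by (auto simp: orbit_def)
  have "\<phi> (inv a) u = y" using orbit_sym_aux[OF a(1) assms(3) a(3)] .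
  thus ?thesis using a by (metis inv_closed image_eqI)
qed

lemma image_open:
  fixes G (structure)
  assumes "homeo_action G X \<phi>" "h \<in> carrier G" "openin X U"
  shows "openin X (\<phi> h ` U)"
  using assms homeomorphic_imp_open_map unfolding homeo_action_def open_map_def by blast

lemma image_comp:
  fixes G (structure)
  assumes "homeo_action G X \<phi>" "a \<in> carrier G" "b \<in> carrier G" "U \<subseteq> topspace X"
  shows "\<phi> a ` (\<phi> b ` U) = \<phi> (a \<otimes>\<^bsub>G\<^esub> b) ` U"
proof -
  interpret group_action G "topspace X" \<phi> using assms(1) by (simp add: homeo_action_def)
  show ?thesis using composition_rule assms(2,3,4) by (auto simp: image_image) (metis (no_types, lifting) image_eqI subsetD)+
qed

theorem proposition2p5:
  fixes G :: "('g, 'c) monoid_scheme" and X :: "'a topology" and \<phi> :: "'g \<Rightarrow> 'a \<Rightarrow> 'a"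
  assumes "compact_space X" and "Hausdorff_space X"
    and "homeo_action G X \<phi>"
    and "minimal_action G X \<phi>"
    and "g \<in> carrier G" and "attracting_fixed_point G X \<phi> g x"
  shows "\<exists>n::nat. n_filling G X \<phi> n"
proof -
  interpret group_action G "topspace X" \<phi> using assms(3) by (simp add: homeo_action_def)
  interpret group G using group_hom group_hom.axioms(1) by auto
  obtain V where V: "openin X V" "x \<in> V" "x \<in> topspace X"
    and att: "\<And>W. openin X W \<Longrightarrow> x \<in> W \<Longrightarrow> \<exists>N. \<forall>n\<ge>N. \<phi> (g [^]\<^bsub>G\<^esub> (n::nat)) ` V \<subseteq> W"
    using assms(6) unfolding attracting_fixed_point_def by metis
  have VX: "V \<subseteq> topspace X" using V(1) openin_subset by auto
  have key: "\<exists>t\<in>carrier G. V \<subseteq> \<phi> t ` U" if U: "openin X U" "U \<noteq> {}" for U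
  proof -
    obtain a where a: "a \<in> carrier G" "x \<in> \<phi> a ` U"
      using orbit_meets_open[OF assms(3,4) V(3) U] by blast
    obtain N :: nat where N: "\<phi> (g [^]\<^bsub>G\<^esub> N) ` V \<subseteq> \<phi> a ` U"
      using att[OF image_open[OF assms(3) a(1) U(1)] a(2)] by blast
    have gN: "g [^]\<^bsub>G\<^esub> N \<in> carrier G" using assms(5) by simp
    have "V = \<phi> (inv\<^bsub>G\<^esub> (g [^]\<^bsub>G\<^esub> N)) ` (\<phi> (g [^]\<^bsub>G\<^esub> N) ` V)"
    proof -
      have "\<phi> (inv\<^bsub>G\<^esub> (g [^]\<^bsub>G\<^esub> N)) (\<phi> (g [^]\<^bsub>G\<^esub> N) v) = v" if "v \<in> V" for v
        using orbit_sym_aux[OF gN] that VX by blast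
      thus ?thesis by (force simp: image_image)
    qed
    also have "\<dots> \<subseteq> \<phi> (inv\<^bsub>G\<^esub> (g [^]\<^bsub>G\<^esub> N)) ` (\<phi> a ` U)" using N by blast
    also have "\<dots> = \<phi> (inv\<^bsub>G\<^esub> (g [^]\<^bsub>G\<^esub> N) \<otimes>\<^bsub>G\<^esub> a) ` U"
      using image_comp[OF assms(3) inv_closed[OF gN] a(1) openin_subset[OF U(1)]] by simp
    finally show ?thesis using gN a(1) by blast
  qed
  have cov: "topspace X \<subseteq> \<Union>((\<lambda>k. \<phi> k ` V) ` carrier G)"
  proof
    fix y assume "y \<in> topspace X"
    then obtain h where "h \<in> carrier G" "y \<in> \<phi> h ` V"
      using orbit_meets_open[OF assms(3,4) _ V(1)] V(2) by blast
    thus "y \<in> \<Union>((\<lambda>k. \<phi> k ` V) ` carrier G)" by blast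
  qed
  have "\<forall>U\<in>(\<lambda>k. \<phi> k ` V) ` carrier G. openin X U"
    using image_open[OF assms(3) _ V(1)] by blast
  then obtain F where F: "finite F" "F \<subseteq> (\<lambda>k. \<phi> k ` V) ` carrier G" "topspace X \<subseteq> \<Union>F"
    using assms(1) cov unfolding compact_space_alt by meson
  then obtain K where K: "K \<subseteq> carrier G" "finite K" "F = (\<lambda>k. \<phi> k ` V) ` K"
    by (meson finite_subset_image)
  obtain ks where ks: "set ks = K" using finite_list[OF K(2)] by blast
  have covK: "topspace X \<subseteq> (\<Union>j<length ks. \<phi> (ks ! j) ` V)"
  proof
    fix y assume "y \<in> topspace X"
    then obtain k where k: "k \<in> set ks" "y \<in> \<phi> k ` V" using F(3) K(3) ks by auto
    then obtain j where "j < length ks" "ks ! j = k" by (auto simp: in_set_conv_nth)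
    thus "y \<in> (\<Union>j<length ks. \<phi> (ks ! j) ` V)" using k by blast
  qed
  have ksG: "ks ! j \<in> carrier G" if "j < length ks" for j
    using K(1) ks that nth_mem by blast
  show ?thesis
  proof (intro exI[of _ "length ks"], unfold n_filling_def, intro allI impI)
    fix U :: "nat \<Rightarrow> 'a set"
    assume U: "\<forall>i<length ks. openin X (U i) \<and> U i \<noteq> {}"
    have "\<forall>i. \<exists>t. i < length ks \<longrightarrow> t \<in> carrier G \<and> \<phi> (ks ! i) ` V \<subseteq> \<phi> t ` U i"
    proof (intro allI)
      fix i show "\<exists>t. i < length ks \<longrightarrow> t \<in> carrier G \<and> \<phi> (ks ! i) ` V \<subseteq> \<phi> t ` U i"
      proof (cases "i < length ks")
        case i: True
        have Uo: "openin X (U i)" "U i \<noteq> {}" using U i by auto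
        have Ui: "U i \<subseteq> topspace X" using openin_subset[OF Uo(1)] .
        obtain t where t: "t \<in> carrier G" "V \<subseteq> \<phi> t ` U i" using key[OF Uo] by blast
        have "\<phi> (ks ! i) ` V \<subseteq> \<phi> (ks ! i) ` (\<phi> t ` U i)" using t(2) by (rule image_mono)
        also have "\<dots> = \<phi> (ks ! i \<otimes>\<^bsub>G\<^esub> t) ` U i"
          using image_comp[OF assms(3) ksG[OF i] t(1) Ui] .
        finally show ?thesis using ksG[OF i] t(1) by blast
      qed simp
    qed
    then obtain t where t: "\<And>i. i < length ks \<Longrightarrow> t i \<in> carrier G \<and> \<phi> (ks ! i) ` V \<subseteq> \<phi> (t i) ` U i"
      by (rule choice[THEN exE]) blast
    have sub: "(\<Union>i<length ks. \<phi> (t i) ` U i) \<subseteq> topspace X"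
    proof (intro UN_least)
      fix i assume "i \<in> {..<length ks}"
      hence i: "i < length ks" by simp
      have "t i \<in> carrier G" using t[OF i] by simp
      moreover have "U i \<subseteq> topspace X" using U i openin_subset by blast
      ultimately show "\<phi> (t i) ` U i \<subseteq> topspace X" using surj_prop by blast
    qed
    have "(\<Union>j<length ks. \<phi> (ks ! j) ` V) \<subseteq> (\<Union>i<length ks. \<phi> (t i) ` U i)"
      using t by (intro UN_mono) auto
    hence "topspace X \<subseteq> (\<Union>i<length ks. \<phi> (t i) ` U i)" using covK by (rule subset_trans[rotated])
    hence "(\<forall>i<length ks. t i \<in> carrier G) \<and> (\<Union>i<length ks. \<phi> (t i) ` U i) = topspace X"
      using sub t by (simp add: subset_antisym)
    thus "\<exists>t. (\<forall>i<length ks. t i \<in> carrier G) \<and> (\<Union>i<length ks. \<phi> (t i) ` U i) = topspace X"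
      by (rule exI[where x=t])
  qed
qed

end
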